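(* Let $\lambda\geq\kappa$ be regular infinite cardinals. Let $\mathcal{L}$ be a distributive lattice which, regarded as a (poset) category, is $(\lambda,\kappa)$-coherent, and let $(A_i)_{i<\kappa}$ be a collection of subsets of $\mathcal{L}$, each of cardinality $<\lambda$. Then there is a set $X$ and an injective order-preserving map $\mathcal{L}\hookrightarrow\mathcal{P}(X)$ into the power set Boolean algebra which preserves all meets of fewer than $\kappa$ elements and which, for each $i<\kappa$, preserves the join $\bigcup A_i$.
   Context: A category $\mathcal{C}$ is $(\lambda,\kappa)$-coherent if: (i) it has all limits of diagrams with fewer than $\kappa$ morphisms; (ii) it has pullback-stable effective epi–mono factorizations; (iii) it has pullback-stable unions of fewer than $\lambda$ subobjects; (iv) for every rooted cotree in $\mathcal{C}$ (a diagram indexed by the opposite of a rooted tree, with arrows from the immediate successors of each node into it) such that at each node having immediate successors these form an extremal epimorphic family with fewer than $\lambda$ members, every branch has length $<\kappa$, and every branch is continuous (objects at limit positions are limits of the preceding objects), the family of transfinite cocompositions of the branches (limit of the branch with its map to the root) is extremal epimorphic on the root. A family $(f_i:x_i\to y)$ is extremal epimorphic if it does not factor through any proper subobject of $y$. *)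

theory Defs
  imports Main
begin

unbundle cardinal_syntax

text \<open>A distributive lattice regarded as a poset category: objects are the
elements, there is an arrow x \<rightarrow> y iff x \<le> y.  Cardinals are represented
as cardinal orders (BNF_Cardinal_Order_Relation); "fewer than kap" is
ordLess of the cardinality.\<close>

definition is_glb :: "'a::order set \<Rightarrow> 'a \<Rightarrow> bool" where
  "is_glb S m \<longleftrightarrow> (\<forall>s\<in>S. m \<le> s) \<and> (\<forall>y. (\<forall>s\<in>S. y \<le> s) \<longrightarrow> y \<le> m)"

definition is_lub :: "'a::order set \<Rightarrow> 'a \<Rightarrow> bool" where
  "is_lub S j \<longleftrightarrow> (\<forall>s\<in>S. s \<le> j) \<and> (\<forall>y. (\<forall>s\<in>S. s \<le> y) \<longrightarrow> j \<le> y)"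

text \<open>In a poset the limit
of a diagram is the greatest lower bound of the objects in its image, and a set
of objects of size < kap (kap infinite) is the image of a discrete diagram with
fewer than kap morphisms (and conversely).\<close>
definition has_small_limits :: "'k rel \<Rightarrow> 'a::distrib_lattice itself \<Rightarrow> bool" where
  "has_small_limits kap _ \<longleftrightarrow> (\<forall>S::'a set. |S| <o kap \<longrightarrow> (\<exists>m. is_glb S m))"

text \<open>(ii) In a poset category every arrow is monic; the kernel pair of x \<le> y
is (id_x, id_x), whose coequalizer is x, so x \<rightarrow> y is an effective epimorphism
iff x = y.  Pullback of x \<le> y along z \<le> y is z \<sqinter> x.\<close>
definition effective_epi :: "'a::order \<Rightarrow> 'a \<Rightarrow> bool" where
  "effective_epi x y \<longleftrightarrow> x \<le> y \<and> x = y"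

definition has_stable_factorizations :: "'a::distrib_lattice itself \<Rightarrow> bool" where
  "has_stable_factorizations _ \<longleftrightarrow>
     (\<forall>x y::'a. x \<le> y \<longrightarrow> (\<exists>m. effective_epi x m \<and> m \<le> y \<and>
        (\<forall>z. z \<le> y \<longrightarrow> effective_epi (inf z x) (inf z m))))"

definition is_union_in :: "'a::order \<Rightarrow> 'a set \<Rightarrow> 'a \<Rightarrow> bool" where
  "is_union_in y S u \<longleftrightarrow> u \<le> y \<and> (\<forall>s\<in>S. s \<le> u) \<and>
      (\<forall>v. v \<le> y \<and> (\<forall>s\<in>S. s \<le> v) \<longrightarrow> u \<le> v)"

definition has_stable_unions :: "'l rel \<Rightarrow> 'a::distrib_lattice itself \<Rightarrow> bool" where
  "has_stable_unions lam _ \<longleftrightarrow>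
     (\<forall>(y::'a) S. S \<subseteq> {s. s \<le> y} \<and> |S| <o lam \<longrightarrow>
        (\<exists>u. is_union_in y S u \<and>
             (\<forall>z. z \<le> y \<longrightarrow> is_union_in z ((inf z) ` S) (inf z u))))"

text \<open>A family of arrows into y (given by the set of its domains) is extremal
epimorphic iff it factors through no proper subobject of y.\<close>
definition extremal_epi_family :: "'a::order \<Rightarrow> 'a set \<Rightarrow> bool" where
  "extremal_epi_family y F \<longleftrightarrow> (\<forall>x\<in>F. x \<le> y) \<and>
     (\<forall>m. m \<le> y \<and> (\<forall>x\<in>F. x \<le> m) \<longrightarrow> m = y)"

definition rooted_tree :: "'n set \<Rightarrow> ('n \<Rightarrow> 'n \<Rightarrow> bool) \<Rightarrow> 'n \<Rightarrow> bool" where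
  "rooted_tree T le r \<longleftrightarrow>
     (\<forall>t\<in>T. le t t) \<and>
     (\<forall>s\<in>T. \<forall>t\<in>T. le s t \<and> le t s \<longrightarrow> s = t) \<and>
     (\<forall>s\<in>T. \<forall>t\<in>T. \<forall>u\<in>T. le s t \<and> le t u \<longrightarrow> le s u) \<and>
     r \<in> T \<and> (\<forall>t\<in>T. le r t) \<and>
     (\<forall>t\<in>T. (\<forall>s\<in>T. \<forall>s'\<in>T. le s t \<and> le s' t \<longrightarrow> le s s' \<or> le s' s) \<and>
        (\<forall>A. A \<noteq> {} \<and> A \<subseteq> {s\<in>T. le s t} \<longrightarrow> (\<exists>a\<in>A. \<forall>b\<in>A. le a b)))"

definition imm_succs :: "'n set \<Rightarrow> ('n \<Rightarrow> 'n \<Rightarrow> bool) \<Rightarrow> 'n \<Rightarrow> 'n set" where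
  "imm_succs T le t = {s\<in>T. le t s \<and> s \<noteq> t \<and>
      \<not> (\<exists>u\<in>T. le t u \<and> u \<noteq> t \<and> le u s \<and> u \<noteq> s)}"

definition is_branch :: "'n set \<Rightarrow> ('n \<Rightarrow> 'n \<Rightarrow> bool) \<Rightarrow> 'n set \<Rightarrow> bool" where
  "is_branch T le B \<longleftrightarrow> B \<subseteq> T \<and> (\<forall>s\<in>B. \<forall>t\<in>B. le s t \<or> le t s) \<and>
     (\<forall>C. C \<subseteq> T \<and> B \<subseteq> C \<and> (\<forall>s\<in>C. \<forall>t\<in>C. le s t \<or> le t s) \<longrightarrow> C = B)"

text \<open>The (well-)order of a branch, as a relation; its order type is the length.\<close>
definition branch_order :: "('n \<Rightarrow> 'n \<Rightarrow> bool) \<Rightarrow> 'n set \<Rightarrow> 'n rel" where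
  "branch_order le B = {(s,t). s \<in> B \<and> t \<in> B \<and> le s t}"

definition continuous_branch :: "('n \<Rightarrow> 'n \<Rightarrow> bool) \<Rightarrow> ('n \<Rightarrow> 'a::order) \<Rightarrow> 'n set \<Rightarrow> bool" where
  "continuous_branch le D B \<longleftrightarrow>
     (\<forall>t\<in>B. let P = {s\<in>B. le s t \<and> s \<noteq> t} in
        (P \<noteq> {} \<and> \<not> (\<exists>p\<in>P. \<forall>s\<in>P. le s p)) \<longrightarrow> is_glb (D ` P) (D t))"

text \<open>A cotree: a diagram indexed by T^op, i.e. D is antitone (arrows D s \<rightarrow> D t
for t \<le> s).\<close>
definition is_cotree :: "'n set \<Rightarrow> ('n \<Rightarrow> 'n \<Rightarrow> bool) \<Rightarrow> 'n \<Rightarrow> ('n \<Rightarrow> 'a::order) \<Rightarrow> bool" where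
  "is_cotree T le r D \<longleftrightarrow> rooted_tree T le r \<and>
     (\<forall>s\<in>T. \<forall>t\<in>T. le t s \<longrightarrow> D s \<le> D t)"

text \<open>(iv) The transfinite-cocomposition condition.  Trees are taken with
nodes in the type 'k \<Rightarrow> 'l (of cardinality at least lam^kap).\<close>
definition cotree_condition :: "'l rel \<Rightarrow> 'k rel \<Rightarrow> 'a::distrib_lattice itself \<Rightarrow> bool" where
  "cotree_condition lam kap _ \<longleftrightarrow>
     (\<forall>(T::('k \<Rightarrow> 'l) set) le r (D::('k \<Rightarrow> 'l) \<Rightarrow> 'a).
        is_cotree T le r D \<and>
        (\<forall>t\<in>T. imm_succs T le t \<noteq> {} \<longrightarrow>
            extremal_epi_family (D t) (D ` imm_succs T le t) \<and> |imm_succs T le t| <o lam) \<and>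
        (\<forall>B. is_branch T le B \<longrightarrow> branch_order le B <o kap) \<and>
        (\<forall>B. is_branch T le B \<longrightarrow> continuous_branch le D B)
      \<longrightarrow> extremal_epi_family (D r) {m. \<exists>B. is_branch T le B \<and> is_glb (D ` B) m})"

definition coherent :: "'l rel \<Rightarrow> 'k rel \<Rightarrow> 'a::distrib_lattice itself \<Rightarrow> bool" where
  "coherent lam kap A \<longleftrightarrow> has_small_limits kap A \<and> has_stable_factorizations A \<and>
     has_stable_unions lam A \<and> cotree_condition lam kap A"

definition regular_infinite_cardinal :: "'k rel \<Rightarrow> bool" where
  "regular_infinite_cardinal r \<longleftrightarrow> Card_order r \<and> infinite (Field r) \<and> regularCard r"

end

theory Submission
  imports Defs
begin

lemma glb_unique: "is_glb S m \<Longrightarrow> is_glb S m' \<Longrightarrow> m = (m'::'a::order)"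
  unfolding is_glb_def by (meson order.antisym)

lemma glb_insert_inf: "is_glb S (m::'a::lattice) \<Longrightarrow> is_glb (insert x S) (inf m x)"
  unfolding is_glb_def by (auto intro: le_infI1 le_infI2)

locale wo =
  fixes kap :: "'k rel"
  assumes WO: "Well_order kap"
begin

lemma refl: "\<alpha> \<in> Field kap \<Longrightarrow> (\<alpha>,\<alpha>) \<in> kap"
  using WO unfolding well_order_on_def linear_order_on_def partial_order_on_def preorder_on_def refl_on_def
  by auto

lemma trans': "(x,y) \<in> kap \<Longrightarrow> (y,z) \<in> kap \<Longrightarrow> (x,z) \<in> kap"
  using WO unfolding well_order_on_def linear_order_on_def partial_order_on_def preorder_on_def
  by (meson transD)

lemma antisym': "(x,y) \<in> kap \<Longrightarrow> (y,x) \<in> kap \<Longrightarrow> x = y"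
  using WO unfolding well_order_on_def linear_order_on_def partial_order_on_def
  by (meson antisymD)

lemma total': "x \<in> Field kap \<Longrightarrow> y \<in> Field kap \<Longrightarrow> (x,y) \<in> kap \<or> (y,x) \<in> kap"
  using WO unfolding well_order_on_def linear_order_on_def total_on_def
  by (metis refl)

lemma minE: assumes "S \<subseteq> Field kap" "S \<noteq> {}" shows "\<exists>g\<in>S. \<forall>x\<in>S. (g,x) \<in> kap"
proof -
  have wf: "wf (kap - Id)" using WO unfolding well_order_on_def by auto
  obtain g where g: "g \<in> S" "\<forall>y. (y,g) \<in> kap - Id \<longrightarrow> y \<notin> S"
    using wfE_min[OF wf, of _ S] assms by (metis ex_in_conv)
  have "\<forall>x\<in>S. (g,x) \<in> kap"
  proof
    fix x assume x: "x \<in> S"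
    show "(g,x) \<in> kap"
    proof (cases "x = g")
      case True then show ?thesis using refl g assms by blast
    next
      case False
      then have "(x,g) \<notin> kap" using g x by blast
      then show ?thesis using total' x g assms by blast
    qed
  qed
  then show ?thesis using g by blast
qed

lemma inField1: "(x,y) \<in> kap \<Longrightarrow> x \<in> Field kap" by (simp add: FieldI1)
lemma inField2: "(x,y) \<in> kap \<Longrightarrow> y \<in> Field kap" by (simp add: FieldI2)

lemma underS_iff: "x \<in> underS kap y \<longleftrightarrow> x \<noteq> y \<and> (x,y) \<in> kap"
  by (simp add: underS_def)

lemma underS_trans1: "x \<in> underS kap y \<Longrightarrow> (y,z) \<in> kap \<Longrightarrow> x \<in> underS kap z"
  by (metis antisym' trans' underS_iff)
lemma underS_trans2: "(x,y) \<in> kap \<Longrightarrow> y \<in> underS kap z \<Longrightarrow> x \<in> underS kap z"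
  by (metis antisym' trans' underS_iff)

lemma not_underS: "x \<in> Field kap \<Longrightarrow> y \<in> Field kap \<Longrightarrow> x \<notin> underS kap y \<Longrightarrow> (y,x) \<in> kap"
  by (metis total' underS_iff refl)

lemma underS_eq: "x \<in> Field kap \<Longrightarrow> y \<in> Field kap \<Longrightarrow> underS kap x = underS kap y \<Longrightarrow> x = y"
  by (metis antisym' not_underS underS_iff)

end

definition good :: "'k rel \<Rightarrow> ('k \<Rightarrow> 'a::order set) \<Rightarrow> 'a set \<Rightarrow> bool" where
  "good kap A F \<longleftrightarrow> (\<forall>x y. x \<in> F \<and> x \<le> y \<longrightarrow> y \<in> F) \<and>
     (\<forall>S m. |S| <o kap \<and> S \<subseteq> F \<and> is_glb S m \<longrightarrow> m \<in> F) \<and>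
     (\<forall>i\<in>Field kap. \<forall>j. is_lub (A i) j \<and> j \<in> F \<longrightarrow> (\<exists>x\<in>A i. x \<in> F))"

locale setting = wo kap
  for kap :: "'k rel" +
  fixes lam :: "'l rel" and A :: "'k \<Rightarrow> 'a::distrib_lattice set"
    and z0 z1 :: 'l and cd :: "'k \<Rightarrow> 'a \<Rightarrow> 'l" and pi :: "'k \<Rightarrow> 'k" and a b :: 'a
  assumes Card: "Card_order kap" and infk: "infinite (Field kap)" and reg: "regularCard kap"
    and coh: "coherent lam kap TYPE('a)"
    and lamCard: "Card_order lam" and infl: "infinite (Field lam)"
    and Alam: "\<forall>i\<in>Field kap. |A i| <o lam"
    and z01: "z0 \<noteq> z1"
    and cdinj: "\<forall>i\<in>Field kap. inj_on (cd i) (A i) \<and> z0 \<notin> cd i ` A i \<and> z1 \<notin> cd i ` A i"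
    and piF: "\<forall>\<beta>\<in>Field kap. pi \<beta> \<in> Field kap"
    and picof: "\<forall>i\<in>Field kap. \<forall>\<delta>\<in>Field kap. \<exists>\<beta>\<in>Field kap. (\<delta>,\<beta>) \<in> kap \<and> pi \<beta> = i"
    and nab: "\<not> a \<le> b"
begin

definition restr :: "('k \<Rightarrow> 'l) \<Rightarrow> 'k \<Rightarrow> 'k \<Rightarrow> 'l" where
  "restr t \<alpha> = (\<lambda>\<beta>. if \<beta> \<in> underS kap \<alpha> then t \<beta> else z0)"

definition C :: "('k \<Rightarrow> 'l) \<Rightarrow> 'a set" where
  "C t = {x. \<exists>\<beta>\<in>Field kap. x \<in> A (pi \<beta>) \<and> t \<beta> = cd (pi \<beta>) x}"

definition Dv :: "('k \<Rightarrow> 'l) \<Rightarrow> 'a" where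
  "Dv t = (SOME m. is_glb (insert a (C t)) m)"

definition splitc :: "'a \<Rightarrow> 'k \<Rightarrow> bool" where
  "splitc c i \<longleftrightarrow> (\<exists>j. is_lub (A i) j \<and> c \<le> j)"

definition validv :: "('k \<Rightarrow> 'l) \<Rightarrow> 'k \<Rightarrow> 'l \<Rightarrow> bool" where
  "validv s \<beta> v \<longleftrightarrow> (if splitc (Dv s) (pi \<beta>) then (\<exists>x\<in>A (pi \<beta>). v = cd (pi \<beta>) x) else v = z1)"

definition node :: "('k \<Rightarrow> 'l) \<Rightarrow> 'k \<Rightarrow> bool" where
  "node t \<alpha> \<longleftrightarrow> \<alpha> \<in> Field kap \<and> (\<forall>\<beta>. t \<beta> \<noteq> z0 \<longleftrightarrow> \<beta> \<in> underS kap \<alpha>) \<and>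
     (\<forall>\<beta>\<in>underS kap \<alpha>. \<not> Dv (restr t \<beta>) \<le> b \<and> validv (restr t \<beta>) \<beta> (t \<beta>))"

definition TT :: "('k \<Rightarrow> 'l) set" where "TT = {t. \<exists>\<alpha>. node t \<alpha>}"

definition le :: "('k \<Rightarrow> 'l) \<Rightarrow> ('k \<Rightarrow> 'l) \<Rightarrow> bool" where
  "le s t \<longleftrightarrow> (\<forall>\<beta>. s \<beta> \<noteq> z0 \<longrightarrow> t \<beta> = s \<beta>)"

definition rt :: "'k \<Rightarrow> 'l" where "rt = (\<lambda>_. z0)"

lemma smalllim: "|S::'a set| <o kap \<Longrightarrow> \<exists>m. is_glb S m"
  using coh unfolding coherent_def has_small_limits_def by blast

lemma Clen: assumes "\<forall>\<beta>. t \<beta> \<noteq> z0 \<longrightarrow> \<beta> \<in> underS kap \<alpha>" "\<alpha> \<in> Field kap"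
  shows "|insert a (C t)| <o kap"
proof -
  define f where "f \<beta> = (SOME x. x \<in> A (pi \<beta>) \<and> t \<beta> = cd (pi \<beta>) x)" for \<beta>
  have "C t \<subseteq> f ` underS kap \<alpha>"
  proof
    fix x assume "x \<in> C t"
    then obtain \<beta> where b: "\<beta> \<in> Field kap" "x \<in> A (pi \<beta>)" "t \<beta> = cd (pi \<beta>) x" unfolding C_def by auto
    then have "t \<beta> \<noteq> z0" using cdinj piF by force
    then have u: "\<beta> \<in> underS kap \<alpha>" using assms by auto
    have "f \<beta> \<in> A (pi \<beta>) \<and> t \<beta> = cd (pi \<beta>) (f \<beta>)" unfolding f_def by (rule someI[of _ x]) (use b in auto)
    then have "f \<beta> = x" using b cdinj piF by (metis inj_onD)
    then show "x \<in> f ` underS kap \<alpha>" using u by auto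
  qed
  then have "|C t| \<le>o |f ` underS kap \<alpha>|" by (rule card_of_mono1)
  then have "|C t| \<le>o |underS kap \<alpha>|" by (rule ordLeq_transitive[OF _ card_of_image])
  then have c1: "|C t| <o kap" by (rule ordLeq_ordLess_trans[OF _ card_of_underS[OF Card assms(2)]])
  have c2: "|{a}| <o kap"
    using finite_ordLess_infinite[of "|{a}|" kap] Card infk card_of_Well_order
    by (metis Field_card_of card_order_on_well_order_on finite.emptyI finite.insertI)
  have "|C t \<union> {a}| <o kap" using card_of_Un_ordLess_infinite_Field[OF infk Card c1 c2] .
  then show ?thesis by simp
qed

lemma Dv_glb: assumes "\<forall>\<beta>. t \<beta> \<noteq> z0 \<longrightarrow> \<beta> \<in> underS kap \<alpha>" "\<alpha> \<in> Field kap"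
  shows "is_glb (insert a (C t)) (Dv t)"
  unfolding Dv_def using smalllim[OF Clen[OF assms]] by (rule someI_ex)

lemma node_glb: "node t \<alpha> \<Longrightarrow> is_glb (insert a (C t)) (Dv t)"
  by (rule Dv_glb[of t \<alpha>]) (auto simp: node_def)

lemma node_field: "node t \<alpha> \<Longrightarrow> \<alpha> \<in> Field kap" by (simp add: node_def)
lemma node_dom: "node t \<alpha> \<Longrightarrow> t \<beta> \<noteq> z0 \<longleftrightarrow> \<beta> \<in> underS kap \<alpha>" by (simp add: node_def)

lemma node_unique: "node t \<alpha> \<Longrightarrow> node t \<alpha>' \<Longrightarrow> \<alpha> = \<alpha>'"
  by (metis node_def underS_eq set_eqI)

lemma restr_restr: "(\<beta>,\<alpha>) \<in> kap \<Longrightarrow> restr (restr t \<alpha>) \<beta> = restr t \<beta>"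
  unfolding restr_def using underS_trans1 by fastforce

lemma restr_self: "node t \<alpha> \<Longrightarrow> restr t \<alpha> = t"
  unfolding restr_def using node_dom by fastforce

lemma node_restr: assumes "node t \<alpha>" "(\<beta>,\<alpha>) \<in> kap" shows "node (restr t \<beta>) \<beta>"
proof -
  have "\<beta> \<in> Field kap" using assms(2) inField1 by blast
  moreover have "\<forall>\<gamma>. restr t \<beta> \<gamma> \<noteq> z0 \<longleftrightarrow> \<gamma> \<in> underS kap \<beta>"
  proof
    fix \<gamma>
    show "restr t \<beta> \<gamma> \<noteq> z0 \<longleftrightarrow> \<gamma> \<in> underS kap \<beta>"
    proof (cases "\<gamma> \<in> underS kap \<beta>")
      case True
      then have "\<gamma> \<in> underS kap \<alpha>" using underS_trans1 assms(2) by blast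
      then show ?thesis using True node_dom[OF assms(1)] by (simp add: restr_def)
    qed (simp add: restr_def)
  qed
  moreover have "\<forall>\<gamma>\<in>underS kap \<beta>. \<not> Dv (restr (restr t \<beta>) \<gamma>) \<le> b \<and> validv (restr (restr t \<beta>) \<gamma>) \<gamma> (restr t \<beta> \<gamma>)"
  proof
    fix \<gamma> assume g: "\<gamma> \<in> underS kap \<beta>"
    then have "restr (restr t \<beta>) \<gamma> = restr t \<gamma>" using restr_restr underS_iff by blast
    moreover have "restr t \<beta> \<gamma> = t \<gamma>" using g by (simp add: restr_def)
    moreover have "\<gamma> \<in> underS kap \<alpha>" using g assms(2) underS_trans1 by blast
    ultimately show "\<not> Dv (restr (restr t \<beta>) \<gamma>) \<le> b \<and> validv (restr (restr t \<beta>) \<gamma>) \<gamma> (restr t \<beta> \<gamma>)"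
      using assms(1) unfolding node_def by simp
  qed
  ultimately show ?thesis unfolding node_def by blast
qed

lemma le_refl: "le t t" by (simp add: le_def)
lemma le_trans: "le s t \<Longrightarrow> le t u \<Longrightarrow> le s u" unfolding le_def by metis
lemma le_antisym: "le s t \<Longrightarrow> le t s \<Longrightarrow> s = t" unfolding le_def by (metis ext)

lemma le_char: assumes "node s \<alpha>" "node t \<gamma>"
  shows "le s t \<longleftrightarrow> (\<alpha>,\<gamma>) \<in> kap \<and> restr t \<alpha> = s"
proof
  assume l: "le s t"
  have sub: "underS kap \<alpha> \<subseteq> underS kap \<gamma>"
  proof
    fix \<beta> assume "\<beta> \<in> underS kap \<alpha>"
    then have "s \<beta> \<noteq> z0" using node_dom[OF assms(1)] by blast
    then have "t \<beta> \<noteq> z0" using l unfolding le_def by metis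
    then show "\<beta> \<in> underS kap \<gamma>" using node_dom[OF assms(2)] by blast
  qed
  have "(\<alpha>,\<gamma>) \<in> kap"
  proof (rule ccontr)
    assume "(\<alpha>,\<gamma>) \<notin> kap"
    then have "\<gamma> \<in> underS kap \<alpha>" using total' assms node_field underS_iff by (metis refl)
    then show False using sub underS_iff by blast
  qed
  moreover have "restr t \<alpha> = s"
  proof
    fix \<beta> show "restr t \<alpha> \<beta> = s \<beta>"
      using l assms(1) node_dom unfolding le_def restr_def by metis
  qed
  ultimately show "(\<alpha>,\<gamma>) \<in> kap \<and> restr t \<alpha> = s" by blast
next
  assume "(\<alpha>,\<gamma>) \<in> kap \<and> restr t \<alpha> = s"
  then have h: "(\<alpha>,\<gamma>) \<in> kap" "restr t \<alpha> = s" by blast+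
  show "le s t" unfolding le_def
  proof (intro allI impI)
    fix \<beta> assume "s \<beta> \<noteq> z0"
    then have "restr t \<alpha> \<beta> \<noteq> z0" using h by simp
    then show "t \<beta> = s \<beta>" using h(2)[symmetric] unfolding restr_def by (simp split: if_splits)
  qed
qed

lemma le_restr: "node t \<gamma> \<Longrightarrow> (\<alpha>,\<gamma>) \<in> kap \<Longrightarrow> le (restr t \<alpha>) t"
  using le_char node_restr by blast

lemma C_mono: "le s t \<Longrightarrow> C s \<subseteq> C t"
proof
  fix x assume l: "le s t" and "x \<in> C s"
  then obtain \<beta> where b: "\<beta> \<in> Field kap" "x \<in> A (pi \<beta>)" "s \<beta> = cd (pi \<beta>) x" unfolding C_def by blast
  then have "s \<beta> \<noteq> z0" using cdinj piF by force
  then have "t \<beta> = s \<beta>" using l unfolding le_def by blast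
  then show "x \<in> C t" using b unfolding C_def by auto
qed

lemma glb_anti: "is_glb S m \<Longrightarrow> is_glb S' m' \<Longrightarrow> S \<subseteq> S' \<Longrightarrow> m' \<le> (m::'a)"
  unfolding is_glb_def by blast

lemma Dv_anti: "node s \<alpha> \<Longrightarrow> node t \<gamma> \<Longrightarrow> le s t \<Longrightarrow> Dv t \<le> Dv s"
  by (meson C_mono glb_anti insert_mono node_glb)

lemma Dv_le_a: "node t \<gamma> \<Longrightarrow> Dv t \<le> a"
  using node_glb unfolding is_glb_def by blast

lemma Dv_le_C: "node t \<gamma> \<Longrightarrow> x \<in> C t \<Longrightarrow> Dv t \<le> x"
  using node_glb unfolding is_glb_def by blast

lemma Dv_great: "node t \<gamma> \<Longrightarrow> y \<le> a \<Longrightarrow> (\<forall>x\<in>C t. y \<le> x) \<Longrightarrow> y \<le> Dv t"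
  using node_glb unfolding is_glb_def by blast

lemma inTT: "node t \<alpha> \<Longrightarrow> t \<in> TT" unfolding TT_def by blast
lemma TTE: "t \<in> TT \<Longrightarrow> \<exists>\<alpha>. node t \<alpha>" unfolding TT_def by blast
lemma branchT: "is_branch TT le B \<Longrightarrow> B \<subseteq> TT" unfolding is_branch_def by blast

lemma root_ex: "\<exists>\<alpha>0. node rt \<alpha>0"
proof -
  have "Field kap \<noteq> {}" using infk by auto
  then obtain g where g: "g \<in> Field kap" "\<forall>x\<in>Field kap. (g,x) \<in> kap" using minE by blast
  have "underS kap g = {}" using g underS_iff antisym' inField1 by blast
  then have "node rt g" unfolding node_def rt_def using g by auto
  then show ?thesis by blast
qed

definition sucw :: "'k \<Rightarrow> 'k" where
  "sucw \<alpha> = (SOME \<sigma>. \<sigma> \<in> Field kap \<and> \<alpha> \<in> underS kap \<sigma> \<and> (\<forall>\<gamma>. \<gamma> \<in> underS kap \<sigma> \<longrightarrow> (\<gamma>,\<alpha>) \<in> kap))"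

lemma sucw: assumes "\<alpha> \<in> Field kap"
  shows "sucw \<alpha> \<in> Field kap \<and> \<alpha> \<in> underS kap (sucw \<alpha>) \<and> (\<forall>\<gamma>. \<gamma> \<in> underS kap (sucw \<alpha>) \<longrightarrow> (\<gamma>,\<alpha>) \<in> kap)"
proof -
  let ?S = "{\<beta>\<in>Field kap. \<alpha> \<in> underS kap \<beta>}"
  have "?S \<noteq> {}" using infinite_Card_order_limit[OF Card infk assms] underS_iff by blast
  then obtain g where g: "g \<in> ?S" "\<forall>x\<in>?S. (g,x) \<in> kap" using minE[of ?S] by blast
  have "\<forall>\<gamma>. \<gamma> \<in> underS kap g \<longrightarrow> (\<gamma>,\<alpha>) \<in> kap"
  proof (intro allI impI)
    fix \<gamma> assume gg: "\<gamma> \<in> underS kap g"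
    show "(\<gamma>,\<alpha>) \<in> kap"
    proof (rule ccontr)
      assume "(\<gamma>,\<alpha>) \<notin> kap"
      then have "\<alpha> \<in> underS kap \<gamma>" "\<gamma> \<in> Field kap"
        using gg assms total' underS_iff inField1 refl by metis+
      then have "(g,\<gamma>) \<in> kap" using g by blast
      then show False using gg antisym' underS_iff by blast
    qed
  qed
  then have "g \<in> Field kap \<and> \<alpha> \<in> underS kap g \<and> (\<forall>\<gamma>. \<gamma> \<in> underS kap g \<longrightarrow> (\<gamma>,\<alpha>) \<in> kap)" using g by blast
  then show ?thesis unfolding sucw_def by (rule someI)
qed

lemma validv_ne: "\<alpha> \<in> Field kap \<Longrightarrow> validv s \<alpha> v \<Longrightarrow> v \<noteq> z0"
  unfolding validv_def using cdinj piF z01 by (auto split: if_splits)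

lemma child_node: assumes "node s \<alpha>" "\<not> Dv s \<le> b" "validv s \<alpha> v"
  shows "node (s(\<alpha>:=v)) (sucw \<alpha>)"
proof -
  have aF: "\<alpha> \<in> Field kap" using assms node_field by blast
  note su = sucw[OF aF]
  have v0: "v \<noteq> z0" using validv_ne aF assms by blast
  have dom: "\<forall>\<beta>. (s(\<alpha>:=v)) \<beta> \<noteq> z0 \<longleftrightarrow> \<beta> \<in> underS kap (sucw \<alpha>)"
  proof
    fix \<beta> show "(s(\<alpha>:=v)) \<beta> \<noteq> z0 \<longleftrightarrow> \<beta> \<in> underS kap (sucw \<alpha>)"
    proof (cases "\<beta> = \<alpha>")
      case True then show ?thesis using v0 su by simp
    next
      case False
      then have "\<beta> \<in> underS kap (sucw \<alpha>) \<longleftrightarrow> \<beta> \<in> underS kap \<alpha>"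
        using su underS_iff underS_trans1 by (metis (no_types, lifting) underS_trans2)
      then show ?thesis using False node_dom[OF assms(1)] by simp
    qed
  qed
  have cond: "\<forall>\<beta>\<in>underS kap (sucw \<alpha>). \<not> Dv (restr (s(\<alpha>:=v)) \<beta>) \<le> b \<and> validv (restr (s(\<alpha>:=v)) \<beta>) \<beta> ((s(\<alpha>:=v)) \<beta>)"
  proof
    fix \<beta> assume bu: "\<beta> \<in> underS kap (sucw \<alpha>)"
    show "\<not> Dv (restr (s(\<alpha>:=v)) \<beta>) \<le> b \<and> validv (restr (s(\<alpha>:=v)) \<beta>) \<beta> ((s(\<alpha>:=v)) \<beta>)"
    proof (cases "\<beta> = \<alpha>")
      case True
      have "restr (s(\<alpha>:=v)) \<alpha> = restr s \<alpha>" unfolding restr_def by (auto simp: underS_iff)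
      then have "restr (s(\<alpha>:=v)) \<alpha> = s" using restr_self assms(1) by simp
      then show ?thesis using True assms by simp
    next
      case False
      then have bu': "\<beta> \<in> underS kap \<alpha>" using bu su underS_iff by blast
      then have "\<alpha> \<notin> underS kap \<beta>" using underS_iff antisym' by blast
      then have "restr (s(\<alpha>:=v)) \<beta> = restr s \<beta>" unfolding restr_def by auto
      then show ?thesis using False bu' assms(1) unfolding node_def by simp
    qed
  qed
  show ?thesis unfolding node_def using su dom cond by blast
qed

lemma imm_char: assumes "node s \<alpha>"
  shows "imm_succs TT le s = {s(\<alpha>:=v) | v. validv s \<alpha> v \<and> \<not> Dv s \<le> b}"
proof -
  have aF: "\<alpha> \<in> Field kap" using assms node_field by blast
  note su = sucw[OF aF]
  show ?thesis
  proof (intro set_eqI iffI)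
    fix t assume "t \<in> imm_succs TT le s"
    then have t: "t \<in> TT" "le s t" "t \<noteq> s" and nb: "\<not> (\<exists>u\<in>TT. le s u \<and> u \<noteq> s \<and> le u t \<and> u \<noteq> t)"
      unfolding imm_succs_def by auto
    then obtain \<gamma> where tg: "node t \<gamma>" unfolding TT_def by blast
    have ag: "(\<alpha>,\<gamma>) \<in> kap" "restr t \<alpha> = s" using le_char[OF assms tg] t by auto
    have "\<alpha> \<noteq> \<gamma>"
    proof
      assume "\<alpha> = \<gamma>"
      then have "s = t" using ag(2) restr_self[OF tg] by simp
      then show False using t by blast
    qed
    then have "\<alpha> \<in> underS kap \<gamma>" using ag underS_iff by blast
    then have ag': "\<alpha> \<in> underS kap \<gamma>" .
    have "\<gamma> \<notin> underS kap (sucw \<alpha>)"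
    proof
      assume "\<gamma> \<in> underS kap (sucw \<alpha>)"
      then have "(\<gamma>,\<alpha>) \<in> kap" using su by blast
      then show False using ag' antisym' underS_iff by blast
    qed
    then have sg: "(sucw \<alpha>, \<gamma>) \<in> kap" using not_underS[of \<gamma> "sucw \<alpha>"] su node_field[OF tg] by blast
    let ?u = "restr t (sucw \<alpha>)"
    have un: "node ?u (sucw \<alpha>)" using node_restr tg sg by blast
    have "le s ?u" using le_char[OF assms un] su ag restr_restr underS_iff by metis
    moreover have "?u \<noteq> s"
    proof -
      have "?u \<alpha> = t \<alpha>" using su by (simp add: restr_def)
      moreover have "t \<alpha> \<noteq> z0" using tg node_dom \<open>\<alpha> \<in> underS kap \<gamma>\<close> by blast
      moreover have "s \<alpha> = z0" using node_dom assms underS_iff by blast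
      ultimately show ?thesis by metis
    qed
    moreover have "le ?u t" using le_restr tg sg by blast
    moreover have "?u \<in> TT" using un inTT TTE by blast
    ultimately have ut: "?u = t" using nb by blast
    then have tn: "node t (sucw \<alpha>)" using un by simp
    have teq: "t = s(\<alpha> := t \<alpha>)"
    proof
      fix \<beta> show "t \<beta> = (s(\<alpha> := t \<alpha>)) \<beta>"
      proof (cases "\<beta> = \<alpha>")
        case False
        show ?thesis
        proof (cases "\<beta> \<in> underS kap \<alpha>")
          case True then show ?thesis using ag False by (metis fun_upd_other restr_def)
        next
          case nt: False
          then have "\<beta> \<notin> underS kap (sucw \<alpha>)" using su False underS_iff by blast
          then have "t \<beta> = z0" using node_dom[OF tn] by blast
          moreover have "s \<beta> = z0" using node_dom[OF assms] nt by blast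
          ultimately show ?thesis using False by simp
        qed
      qed simp
    qed
    have "\<not> Dv (restr t \<alpha>) \<le> b \<and> validv (restr t \<alpha>) \<alpha> (t \<alpha>)" using tn su unfolding node_def by blast
    then show "t \<in> {s(\<alpha>:=v) | v. validv s \<alpha> v \<and> \<not> Dv s \<le> b}" using ag teq by blast
  next
    fix t assume "t \<in> {s(\<alpha>:=v) | v. validv s \<alpha> v \<and> \<not> Dv s \<le> b}"
    then obtain v where v: "t = s(\<alpha>:=v)" "validv s \<alpha> v" "\<not> Dv s \<le> b" by blast
    have tn: "node t (sucw \<alpha>)" using child_node assms v by blast
    have "le s t" unfolding le_def v(1) using node_dom[OF assms] underS_iff by auto
    moreover have "t \<noteq> s" using v validv_ne aF node_dom[OF assms] underS_iff by (metis fun_upd_same)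
    moreover have "\<not> (\<exists>u\<in>TT. le s u \<and> u \<noteq> s \<and> le u t \<and> u \<noteq> t)"
    proof
      assume "\<exists>u\<in>TT. le s u \<and> u \<noteq> s \<and> le u t \<and> u \<noteq> t"
      then obtain u \<mu> where u: "node u \<mu>" "le s u" "u \<noteq> s" "le u t" "u \<noteq> t" unfolding TT_def by blast
      have m1: "(\<alpha>,\<mu>) \<in> kap" "\<alpha> \<noteq> \<mu>" using le_char[OF assms u(1)] u restr_self by metis+
      have m2: "(\<mu>, sucw \<alpha>) \<in> kap" "\<mu> \<noteq> sucw \<alpha>" using le_char[OF u(1) tn] u restr_self tn by metis+
      have "(\<mu>,\<alpha>) \<in> kap" using su m2 underS_iff by blast
      then show False using m1 antisym' by blast
    qed
    moreover have "t \<in> TT" using tn inTT TTE by blast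
    ultimately show "t \<in> imm_succs TT le s" unfolding imm_succs_def by blast
  qed
qed

lemma extremal_split:
  assumes j: "is_lub (A i) j" and cj: "c \<le> j" and card: "|A i| <o lam"
  shows "extremal_epi_family c ((\<lambda>x. inf c x) ` A i)"
proof -
  have "has_stable_unions lam TYPE('a)" using coh coherent_def by blast
  then obtain u where u: "is_union_in j (A i) u" "\<forall>z. z \<le> j \<longrightarrow> is_union_in z ((inf z) ` A i) (inf z u)"
    unfolding has_stable_unions_def using j card unfolding is_lub_def by (metis (no_types, lifting) mem_Collect_eq subsetI)
  have "u = j" using u(1) j unfolding is_union_in_def is_lub_def by (meson order.antisym order.refl)
  then have "is_union_in c ((inf c) ` A i) (inf c j)" using u(2) cj by blast
  then have "is_union_in c ((inf c) ` A i) c" using cj by (simp add: inf_absorb1)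
  then show ?thesis unfolding extremal_epi_family_def is_union_in_def by (meson order.antisym)
qed

lemma C_child: assumes "node s \<alpha>" "x \<in> A (pi \<alpha>)"
  shows "C (s(\<alpha> := cd (pi \<alpha>) x)) = insert x (C s)"
proof -
  have aF: "\<alpha> \<in> Field kap" using assms node_field by blast
  have s0: "s \<alpha> = z0" using node_dom assms underS_iff by blast
  show ?thesis
  proof (intro set_eqI iffI)
    fix y assume "y \<in> C (s(\<alpha> := cd (pi \<alpha>) x))"
    then obtain \<beta> where b: "\<beta> \<in> Field kap" "y \<in> A (pi \<beta>)" "(s(\<alpha> := cd (pi \<alpha>) x)) \<beta> = cd (pi \<beta>) y"
      unfolding C_def by blast
    show "y \<in> insert x (C s)"
    proof (cases "\<beta> = \<alpha>")
      case True
      then have "cd (pi \<alpha>) x = cd (pi \<alpha>) y" using b by simp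
      moreover have "inj_on (cd (pi \<alpha>)) (A (pi \<alpha>))" using cdinj piF aF by blast
      moreover have "y \<in> A (pi \<alpha>)" using b(2) True by simp
      ultimately have "x = y" using assms(2) by (meson inj_onD)
      then have "y = x" by simp
      then show ?thesis by blast
    next
      case False then show ?thesis using b unfolding C_def by auto
    qed
  next
    fix y assume "y \<in> insert x (C s)"
    then show "y \<in> C (s(\<alpha> := cd (pi \<alpha>) x))"
    proof
      assume "y = x" then show ?thesis unfolding C_def using aF assms by force
    next
      assume "y \<in> C s"
      then obtain \<beta> where b: "\<beta> \<in> Field kap" "y \<in> A (pi \<beta>)" "s \<beta> = cd (pi \<beta>) y" unfolding C_def by blast
      then have "\<beta> \<noteq> \<alpha>" using s0 cdinj piF by force
      then show ?thesis using b unfolding C_def by auto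
    qed
  qed
qed

lemma C_skip: assumes "node s \<alpha>" shows "C (s(\<alpha> := z1)) = C s"
proof -
  have aF: "\<alpha> \<in> Field kap" using assms node_field by blast
  have s0: "s \<alpha> = z0" using node_dom assms underS_iff by blast
  show ?thesis unfolding C_def using cdinj piF s0 aF by (auto, force+)
qed

lemma child_dom: "node s \<alpha> \<Longrightarrow> \<forall>\<beta>. (s(\<alpha>:=v)) \<beta> \<noteq> z0 \<longrightarrow> \<beta> \<in> underS kap (sucw \<alpha>)"
  using sucw node_field node_dom underS_trans1 underS_iff by (metis fun_upd_apply)

lemma Dv_child: assumes "node s \<alpha>" "x \<in> A (pi \<alpha>)"
  shows "Dv (s(\<alpha> := cd (pi \<alpha>) x)) = inf (Dv s) x"
proof -
  have aF: "\<alpha> \<in> Field kap" using assms node_field by blast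
  have "is_glb (insert a (C (s(\<alpha> := cd (pi \<alpha>) x)))) (Dv (s(\<alpha> := cd (pi \<alpha>) x)))"
    using Dv_glb[OF child_dom[OF assms(1)]] sucw[OF aF] by blast
  moreover have "is_glb (insert a (C (s(\<alpha> := cd (pi \<alpha>) x)))) (inf (Dv s) x)"
    using glb_insert_inf[OF node_glb[OF assms(1)], of x] C_child[OF assms] by (simp add: insert_commute)
  ultimately show ?thesis using glb_unique by blast
qed

lemma Dv_skip: assumes "node s \<alpha>" shows "Dv (s(\<alpha> := z1)) = Dv s"
  unfolding Dv_def using C_skip[OF assms] by simp

lemma imm_ok: assumes "node s \<alpha>" "imm_succs TT le s \<noteq> {}"
  shows "extremal_epi_family (Dv s) (Dv ` imm_succs TT le s) \<and> |imm_succs TT le s| <o lam"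
proof -
  have aF: "\<alpha> \<in> Field kap" using assms node_field by blast
  have piA: "|A (pi \<alpha>)| <o lam" using Alam piF aF by blast
  have nb: "\<not> Dv s \<le> b" using assms imm_char by auto
  show ?thesis
  proof (cases "splitc (Dv s) (pi \<alpha>)")
    case True
    then have I: "imm_succs TT le s = (\<lambda>x. s(\<alpha> := cd (pi \<alpha>) x)) ` A (pi \<alpha>)"
      using imm_char[OF assms(1)] nb unfolding validv_def by auto
    then have "Dv ` imm_succs TT le s = (\<lambda>x. inf (Dv s) x) ` A (pi \<alpha>)"
      using Dv_child[OF assms(1)] by (auto simp: image_iff)
    moreover obtain j where "is_lub (A (pi \<alpha>)) j" "Dv s \<le> j" using True splitc_def by blast
    ultimately have "extremal_epi_family (Dv s) (Dv ` imm_succs TT le s)"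
      using extremal_split piA by simp
    moreover have "|imm_succs TT le s| <o lam" unfolding I by (rule ordLeq_ordLess_trans[OF card_of_image piA])
    ultimately show ?thesis by blast
  next
    case False
    then have I: "imm_succs TT le s = {s(\<alpha> := z1)}"
      using imm_char[OF assms(1)] nb unfolding validv_def by auto
    have "extremal_epi_family (Dv s) (Dv ` imm_succs TT le s)"
      unfolding I using Dv_skip[OF assms(1)] by (auto simp: extremal_epi_family_def intro: order.antisym)
    moreover have "|imm_succs TT le s| <o lam" unfolding I
      using finite_ordLess_infinite[of "|{s(\<alpha> := z1)}|" lam] lamCard infl card_of_Well_order
      by (metis Field_card_of card_order_on_well_order_on finite.emptyI finite.insertI)
    ultimately show ?thesis by blast
  qed
qed

lemma prefix: assumes "node t \<gamma>" "s \<in> TT" "le s t"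
  shows "\<exists>\<beta>. (\<beta>,\<gamma>) \<in> kap \<and> s = restr t \<beta> \<and> node s \<beta>"
proof -
  obtain \<beta> where "node s \<beta>" using assms(2) unfolding TT_def by blast
  then show ?thesis using assms(1,3) le_char by blast
qed

lemma restr_le: assumes "node t \<gamma>" "(\<beta>',\<gamma>) \<in> kap" "(\<beta>,\<beta>') \<in> kap"
  shows "le (restr t \<beta>) (restr t \<beta>')"
proof -
  have "(\<beta>,\<gamma>) \<in> kap" using assms trans' by blast
  then have n1: "node (restr t \<beta>) \<beta>" using node_restr assms by blast
  have n2: "node (restr t \<beta>') \<beta>'" using node_restr assms by blast
  show ?thesis using le_char[OF n1 n2] restr_restr assms by metis
qed

lemma rooted: "rooted_tree TT le rt"
proof -
  have "rt \<in> TT" using root_ex inTT TTE by blast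
  moreover have "\<forall>t\<in>TT. le rt t" by (simp add: le_def rt_def)
  moreover have "\<forall>t\<in>TT. (\<forall>s\<in>TT. \<forall>s'\<in>TT. le s t \<and> le s' t \<longrightarrow> le s s' \<or> le s' s) \<and>
        (\<forall>B. B \<noteq> {} \<and> B \<subseteq> {s\<in>TT. le s t} \<longrightarrow> (\<exists>x\<in>B. \<forall>y\<in>B. le x y))"
  proof
    fix t assume "t \<in> TT"
    then obtain \<gamma> where tg: "node t \<gamma>" unfolding TT_def by blast
    have "\<forall>s\<in>TT. \<forall>s'\<in>TT. le s t \<and> le s' t \<longrightarrow> le s s' \<or> le s' s"
    proof (intro ballI impI)
      fix s s' assume "s \<in> TT" "s' \<in> TT" "le s t \<and> le s' t"
      then obtain \<beta> \<beta>' where "(\<beta>,\<gamma>) \<in> kap" "s = restr t \<beta>" "(\<beta>',\<gamma>) \<in> kap" "s' = restr t \<beta>'"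
        using prefix tg by metis
      then show "le s s' \<or> le s' s" using restr_le tg total' inField1 by metis
    qed
    moreover have "\<forall>B. B \<noteq> {} \<and> B \<subseteq> {s\<in>TT. le s t} \<longrightarrow> (\<exists>x\<in>B. \<forall>y\<in>B. le x y)"
    proof (intro allI impI)
      fix B assume B: "B \<noteq> {} \<and> B \<subseteq> {s\<in>TT. le s t}"
      let ?L = "{\<beta>. (\<beta>,\<gamma>) \<in> kap \<and> restr t \<beta> \<in> B}"
      have "\<forall>s\<in>B. \<exists>\<beta>. (\<beta>,\<gamma>) \<in> kap \<and> s = restr t \<beta>" using B prefix tg by blast
      then have "?L \<noteq> {}" using B by fastforce
      moreover have "?L \<subseteq> Field kap" using inField1 by blast
      ultimately obtain g where g: "g \<in> ?L" "\<forall>x\<in>?L. (g,x) \<in> kap" using minE by blast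
      have "\<forall>y\<in>B. le (restr t g) y"
      proof
        fix y assume "y \<in> B"
        then obtain \<beta> where "(\<beta>,\<gamma>) \<in> kap" "y = restr t \<beta>" using \<open>\<forall>s\<in>B. _\<close> by blast
        then show "le (restr t g) y" using g restr_le tg \<open>y \<in> B\<close> by blast
      qed
      then show "\<exists>x\<in>B. \<forall>y\<in>B. le x y" using g by blast
    qed
    ultimately show "(\<forall>s\<in>TT. \<forall>s'\<in>TT. le s t \<and> le s' t \<longrightarrow> le s s' \<or> le s' s) \<and>
        (\<forall>B. B \<noteq> {} \<and> B \<subseteq> {s\<in>TT. le s t} \<longrightarrow> (\<exists>x\<in>B. \<forall>y\<in>B. le x y))" by blast
  qed
  moreover have "\<forall>t\<in>TT. le t t" using le_refl by blast
  moreover have "\<forall>s\<in>TT. \<forall>t\<in>TT. le s t \<and> le t s \<longrightarrow> s = t" using le_antisym by blast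
  moreover have "\<forall>s\<in>TT. \<forall>t\<in>TT. \<forall>u\<in>TT. le s t \<and> le t u \<longrightarrow> le s u" using le_trans by blast
  ultimately show ?thesis unfolding rooted_tree_def by (intro conjI)
qed

lemma pred_comp: assumes "t \<in> TT" "s \<in> TT" "s' \<in> TT" "le s t" "le s' t" shows "le s s' \<or> le s' s"
proof -
  obtain \<gamma> where tg: "node t \<gamma>" using TTE assms(1) by blast
  obtain \<beta> \<beta>' where "(\<beta>,\<gamma>) \<in> kap" "s = restr t \<beta>" "(\<beta>',\<gamma>) \<in> kap" "s' = restr t \<beta>'"
    using prefix tg assms by metis
  then show ?thesis using restr_le[OF tg] total' inField1 by metis
qed

lemma cotree: "is_cotree TT le rt Dv"
  unfolding is_cotree_def
proof (intro conjI rooted ballI impI)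
  fix s t assume "s \<in> TT" "t \<in> TT" "le t s"
  then obtain \<alpha> \<gamma> where "node s \<alpha>" "node t \<gamma>" using TTE by blast
  then show "Dv s \<le> Dv t" using Dv_anti \<open>le t s\<close> by blast
qed

lemma Dv_rt: "Dv rt = a"
proof -
  obtain g where g: "node rt g" using root_ex by blast
  have "C rt = {}" unfolding C_def rt_def using cdinj piF by force
  then have "is_glb {a} (Dv rt)" using node_glb[OF g] by simp
  moreover have "is_glb {a} a" unfolding is_glb_def by simp
  ultimately show ?thesis using glb_unique by blast
qed

lemma branch_add: assumes "is_branch TT le B" "c \<in> TT" "\<forall>x\<in>B. le x c \<or> le c x" shows "c \<in> B"
proof -
  have BT: "B \<subseteq> TT" and ch: "\<forall>x\<in>B. \<forall>y\<in>B. le x y \<or> le y x"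
    and mx: "\<forall>C. C \<subseteq> TT \<and> B \<subseteq> C \<and> (\<forall>x\<in>C. \<forall>y\<in>C. le x y \<or> le y x) \<longrightarrow> C = B"
    using assms(1) unfolding is_branch_def by blast+
  have "insert c B \<subseteq> TT" using BT assms(2) by blast
  moreover have "B \<subseteq> insert c B" by blast
  moreover have "\<forall>x\<in>insert c B. \<forall>y\<in>insert c B. le x y \<or> le y x"
    using ch assms(3) le_refl by blast
  ultimately have "insert c B = B" using mx by blast
  then show ?thesis by blast
qed

lemma branch_down: assumes "is_branch TT le B" "t \<in> B" "s \<in> TT" "le s t" shows "s \<in> B"
proof -
  have BT: "B \<subseteq> TT" and ch: "\<forall>x\<in>B. \<forall>y\<in>B. le x y \<or> le y x"
    and mx: "\<forall>C. C \<subseteq> TT \<and> B \<subseteq> C \<and> (\<forall>x\<in>C. \<forall>y\<in>C. le x y \<or> le y x) \<longrightarrow> C = B"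
    using assms(1) unfolding is_branch_def by blast+
  obtain \<gamma> where tg: "node t \<gamma>" using assms BT inTT TTE by blast
  have "\<forall>u\<in>B. le s u \<or> le u s"
  proof
    fix u assume u: "u \<in> B"
    then consider "le u t" | "le t u" using ch assms by blast
    then show "le s u \<or> le u s"
    proof cases
      case 1
      then have "u \<in> TT" using u BT by blast
      then show ?thesis using pred_comp[of t u s] 1 assms BT by blast
    next
      case 2 then show ?thesis using le_trans assms by blast
    qed
  qed
  then show ?thesis using branch_add[OF assms(1,3)] by blast
qed

lemma branch_cont: assumes "is_branch TT le B" shows "continuous_branch le Dv B"
  unfolding continuous_branch_def Let_def
proof (intro ballI impI)
  fix t assume tB: "t \<in> B"
  let ?P = "{s \<in> B. le s t \<and> s \<noteq> t}"
  assume h: "?P \<noteq> {} \<and> \<not> (\<exists>p\<in>?P. \<forall>s\<in>?P. le s p)"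
  have BT: "B \<subseteq> TT" using branchT[OF assms(1)] by blast
  obtain \<alpha> where tn: "node t \<alpha>" using tB BT inTT TTE by blast
  have lb: "\<forall>s\<in>?P. Dv t \<le> Dv s" using Dv_anti tn BT inTT TTE by blast
  have gr: "y \<le> Dv t" if y: "\<forall>s\<in>?P. y \<le> Dv s" for y
  proof (rule Dv_great[OF tn])
    obtain s where s: "s \<in> ?P" using h by blast
    then have "s \<in> TT" using BT by blast
    then obtain \<beta> where "node s \<beta>" using TTE by blast
    then have "Dv s \<le> a" by (rule Dv_le_a)
    moreover have "y \<le> Dv s" using y s by blast
    ultimately show "y \<le> a" by (rule order.trans[rotated])
    show "\<forall>x\<in>C t. y \<le> x"
    proof
      fix x assume "x \<in> C t"
      then obtain \<gamma> where g: "\<gamma> \<in> Field kap" "x \<in> A (pi \<gamma>)" "t \<gamma> = cd (pi \<gamma>) x" unfolding C_def by blast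
      then have "t \<gamma> \<noteq> z0" using cdinj piF by force
      then have gu: "\<gamma> \<in> underS kap \<alpha>" using node_dom tn by blast
      then have ga: "(\<gamma>,\<alpha>) \<in> kap" using underS_iff by blast
      have "restr t \<gamma> \<in> TT" using node_restr tn ga inTT TTE by blast
      moreover have "le (restr t \<gamma>) t" using le_restr tn ga by blast
      moreover have "restr t \<gamma> \<noteq> t"
      proof
        assume "restr t \<gamma> = t"
        moreover have "restr t \<gamma> \<gamma> = z0" by (simp add: restr_def underS_iff)
        ultimately show False using \<open>t \<gamma> \<noteq> z0\<close> by simp
      qed
      ultimately have "restr t \<gamma> \<in> ?P" using branch_down[OF assms tB] by blast
      then obtain s' where s': "s' \<in> ?P" "\<not> le s' (restr t \<gamma>)" using h by blast
      then obtain \<beta>' where b': "(\<beta>',\<alpha>) \<in> kap" "s' = restr t \<beta>'" "node s' \<beta>'" using prefix tn BT by blast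
      then have "(\<beta>',\<gamma>) \<notin> kap" using restr_le tn ga s' by blast
      then have "\<gamma> \<in> underS kap \<beta>'" using total' g inField1 b' underS_iff by (metis refl)
      then have "x \<in> C s'" using g b' unfolding C_def restr_def by auto
      then have "Dv s' \<le> x" using Dv_le_C b' by blast
      then show "y \<le> x" using y s' by (meson order.trans)
    qed
  qed
  show "is_glb (Dv ` ?P) (Dv t)" unfolding is_glb_def using lb gr by blast
qed

lemma branch_max_leaf: assumes "is_branch TT le B" "t \<in> B" "\<forall>u\<in>B. le u t"
  shows "imm_succs TT le t = {}"
proof (rule ccontr)
  assume "imm_succs TT le t \<noteq> {}"
  then obtain c where c: "c \<in> TT" "le t c" "c \<noteq> t" unfolding imm_succs_def by blast
  have BT: "B \<subseteq> TT" and ch: "\<forall>x\<in>B. \<forall>y\<in>B. le x y \<or> le y x"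
    and mx: "\<forall>C. C \<subseteq> TT \<and> B \<subseteq> C \<and> (\<forall>x\<in>C. \<forall>y\<in>C. le x y \<or> le y x) \<longrightarrow> C = B"
    using assms(1) unfolding is_branch_def by blast+
  have "\<forall>x\<in>B. le x c \<or> le c x" using assms(3) c(2) le_trans by blast
  then have "c \<in> B" using branch_add[OF assms(1) c(1)] by blast
  then have "le c t" using assms by blast
  then show False using c le_antisym by blast
qed

lemma leaf_le_b: assumes "node t \<alpha>" "imm_succs TT le t = {}" shows "Dv t \<le> b"
proof (rule ccontr)
  assume nb: "\<not> Dv t \<le> b"
  have "\<exists>v. validv t \<alpha> v"
  proof (cases "splitc (Dv t) (pi \<alpha>)")
    case True
    then obtain j where j: "is_lub (A (pi \<alpha>)) j" "Dv t \<le> j" using splitc_def by blast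
    have "A (pi \<alpha>) \<noteq> {}"
    proof
      assume "A (pi \<alpha>) = {}"
      then have "j \<le> b" using j unfolding is_lub_def by simp
      then show False using j nb by (meson order.trans)
    qed
    then show ?thesis using True unfolding validv_def by auto
  next
    case False then show ?thesis unfolding validv_def by auto
  qed
  then show False using imm_char[OF assms(1)] assms(2) nb by blast
qed

lemma branch_short: assumes "is_branch TT le B" "t \<in> B" "\<forall>u\<in>B. le u t"
  shows "branch_order le B <o kap"
proof -
  have BT: "B \<subseteq> TT" using branchT[OF assms(1)] by blast
  obtain \<alpha> where tn: "node t \<alpha>" using assms BT inTT TTE by blast
  have aF: "\<alpha> \<in> Field kap" using tn node_field by blast
  let ?U = "under kap \<alpha>"
  have Beq: "B = restr t ` ?U"
  proof
    show "B \<subseteq> restr t ` ?U"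
    proof
      fix u assume "u \<in> B"
      then obtain \<beta> where "(\<beta>,\<alpha>) \<in> kap" "u = restr t \<beta>" using prefix tn BT assms by blast
      then show "u \<in> restr t ` ?U" by (auto simp: under_def)
    qed
    show "restr t ` ?U \<subseteq> B"
    proof
      fix u assume "u \<in> restr t ` ?U"
      then obtain \<beta> where b: "(\<beta>,\<alpha>) \<in> kap" "u = restr t \<beta>" by (auto simp: under_def)
      then have "u \<in> TT" using node_restr[OF tn] inTT by blast
      moreover have "le u t" using le_restr[OF tn] b by blast
      ultimately show "u \<in> B" using branch_down[OF assms(1,2)] by blast
    qed
  qed
  have inj: "inj_on (restr t) (Field (Restr kap ?U))"
  proof (rule inj_onI)
    fix x y assume "x \<in> Field (Restr kap ?U)" "y \<in> Field (Restr kap ?U)" "restr t x = restr t y"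
    then have "x \<in> ?U" "y \<in> ?U" "restr t x = restr t y" using Field_Restr_subset[of kap ?U] by blast+
    then have "(x,\<alpha>) \<in> kap" "(y,\<alpha>) \<in> kap" by (auto simp: under_def)
    then have "node (restr t x) x" "node (restr t y) y" using node_restr[OF tn] by blast+
    then have "node (restr t x) x" "node (restr t x) y" using \<open>restr t x = restr t y\<close> by simp_all
    then show "x = y" using node_unique by blast
  qed
  have eq: "branch_order le B = dir_image (Restr kap ?U) (restr t)"
  proof (intro set_eqI iffI)
    fix p assume "p \<in> branch_order le B"
    then obtain s s' where p: "p = (s,s')" "s \<in> B" "s' \<in> B" "le s s'" unfolding branch_order_def by blast
    then obtain \<beta> \<beta>' where bb: "\<beta> \<in> ?U" "\<beta>' \<in> ?U" "s = restr t \<beta>" "s' = restr t \<beta>'" using Beq by blast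
    then have "node s \<beta>" "node s' \<beta>'" using node_restr tn by (auto simp: under_def)
    then have "(\<beta>,\<beta>') \<in> kap" using le_char p by blast
    then show "p \<in> dir_image (Restr kap ?U) (restr t)" unfolding dir_image_def using bb p by blast
  next
    fix p assume "p \<in> dir_image (Restr kap ?U) (restr t)"
    then obtain \<beta> \<beta>' where p: "p = (restr t \<beta>, restr t \<beta>')" "(\<beta>,\<beta>') \<in> kap" "\<beta> \<in> ?U" "\<beta>' \<in> ?U"
      unfolding dir_image_def by blast
    then have "le (restr t \<beta>) (restr t \<beta>')" using restr_le tn by (auto simp: under_def)
    then show "p \<in> branch_order le B" unfolding branch_order_def using p Beq by blast
  qed
  have wr: "Well_order (Restr kap ?U)" using Well_order_Restr WO by blast
  have iso: "Restr kap ?U =o branch_order le B" using dir_image_ordIso[OF wr inj] eq by simp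
  have "?U < Field kap"
  proof -
    have "?U \<subseteq> Field kap" using inField1 by (auto simp: under_def)
    moreover have "sucw \<alpha> \<notin> ?U" using sucw[OF aF] antisym' underS_iff by (auto simp: under_def)
    moreover have "sucw \<alpha> \<in> Field kap" using sucw[OF aF] by blast
    ultimately show ?thesis by blast
  qed
  moreover have "wo_rel.ofilter kap ?U" by (rule wo_rel.under_ofilter) (simp add: wo_rel_def WO)
  ultimately have "Restr kap ?U <o kap" using ofilter_ordLess WO by blast
  then show ?thesis by (rule ordIso_ordLess_trans[OF ordIso_symmetric[OF iso]])
qed

lemma some_branch_nomax: "\<exists>B. is_branch TT le B \<and> (\<forall>t\<in>B. \<exists>u\<in>B. \<not> le u t)"
proof (rule ccontr)
  assume "\<not> ?thesis"
  then have allmax: "\<forall>B. is_branch TT le B \<longrightarrow> (\<exists>t\<in>B. \<forall>u\<in>B. le u t)" by blast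
  have cc: "cotree_condition lam kap TYPE('a)" using coh coherent_def by blast
  have ante: "is_cotree TT le rt Dv \<and>
        (\<forall>t\<in>TT. imm_succs TT le t \<noteq> {} \<longrightarrow>
            extremal_epi_family (Dv t) (Dv ` imm_succs TT le t) \<and> |imm_succs TT le t| <o lam) \<and>
        (\<forall>B. is_branch TT le B \<longrightarrow> branch_order le B <o kap) \<and>
        (\<forall>B. is_branch TT le B \<longrightarrow> continuous_branch le Dv B)"
    using cotree imm_ok branch_short branch_cont allmax inTT TTE by blast
  have ext: "extremal_epi_family (Dv rt) {m. \<exists>B. is_branch TT le B \<and> is_glb (Dv ` B) m}"
    using cc ante unfolding cotree_condition_def by blast
  have "\<forall>m\<in>{m. \<exists>B. is_branch TT le B \<and> is_glb (Dv ` B) m}. m \<le> inf a b"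
  proof
    fix m assume "m \<in> {m. \<exists>B. is_branch TT le B \<and> is_glb (Dv ` B) m}"
    then obtain B where B: "is_branch TT le B" "is_glb (Dv ` B) m" by blast
    then obtain t where t: "t \<in> B" "\<forall>u\<in>B. le u t" using allmax by blast
    obtain \<alpha> where tn: "node t \<alpha>" using t branchT[OF B(1)] TTE by blast
    have "Dv t \<le> b" using leaf_le_b[OF tn branch_max_leaf[OF B(1) t]] .
    moreover have "Dv t \<le> a" using Dv_le_a tn by blast
    moreover have "m \<le> Dv t" using B(2) t unfolding is_glb_def by blast
    ultimately show "m \<le> inf a b" by (meson le_inf_iff order.trans)
  qed
  then have "inf a b = a" using ext Dv_rt unfolding extremal_epi_family_def by simp
  then show False using nab by (metis inf.absorb_iff1)
qed

lemma exists_good: "\<exists>F. good kap A F \<and> a \<in> F \<and> b \<notin> F"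
proof -
  obtain B where Bb: "is_branch TT le B" and nm: "\<forall>t\<in>B. \<exists>u\<in>B. \<not> le u t" using some_branch_nomax by blast
  have BT: "B \<subseteq> TT" and ch: "\<forall>x\<in>B. \<forall>y\<in>B. le x y \<or> le y x"
    and mx: "\<forall>C. C \<subseteq> TT \<and> B \<subseteq> C \<and> (\<forall>x\<in>C. \<forall>y\<in>C. le x y \<or> le y x) \<longrightarrow> C = B"
    using Bb unfolding is_branch_def by blast+
  have cons: "t \<beta> = t' \<beta>" if "t \<in> B" "t' \<in> B" "t \<beta> \<noteq> z0" "t' \<beta> \<noteq> z0" for t t' \<beta>
    using ch that unfolding le_def by metis
  have cover: "\<forall>\<alpha>\<in>Field kap. \<exists>t\<in>B. t \<alpha> \<noteq> z0"
  proof (rule ccontr)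
    assume "\<not> ?thesis"
    then have "{\<alpha>\<in>Field kap. \<forall>t\<in>B. t \<alpha> = z0} \<noteq> {}" by blast
    then obtain \<gamma> where g: "\<gamma> \<in> Field kap" "\<forall>t\<in>B. t \<gamma> = z0"
      and gmin: "\<forall>x\<in>{\<alpha>\<in>Field kap. \<forall>t\<in>B. t \<alpha> = z0}. (\<gamma>,x) \<in> kap"
      using minE[of "{\<alpha>\<in>Field kap. \<forall>t\<in>B. t \<alpha> = z0}"] by blast
    define \<sigma> where "\<sigma> \<beta> = (if \<exists>t\<in>B. t \<beta> \<noteq> z0 then (SOME t. t \<in> B \<and> t \<beta> \<noteq> z0) \<beta> else z0)" for \<beta>
    have sig: "\<sigma> \<beta> = t \<beta>" if "t \<in> B" "t \<beta> \<noteq> z0" for t \<beta>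
    proof -
      have "(SOME t. t \<in> B \<and> t \<beta> \<noteq> z0) \<in> B \<and> (SOME t. t \<in> B \<and> t \<beta> \<noteq> z0) \<beta> \<noteq> z0"
        by (rule someI[of _ t]) (use that in blast)
      then show ?thesis unfolding \<sigma>_def using that cons by auto
    qed
    have dom: "\<forall>\<beta>. \<sigma> \<beta> \<noteq> z0 \<longleftrightarrow> \<beta> \<in> underS kap \<gamma>"
    proof
      fix \<beta> show "\<sigma> \<beta> \<noteq> z0 \<longleftrightarrow> \<beta> \<in> underS kap \<gamma>"
      proof
        assume "\<sigma> \<beta> \<noteq> z0"
        then obtain t where t: "t \<in> B" "t \<beta> \<noteq> z0" unfolding \<sigma>_def by (metis)
        obtain \<alpha> where tn: "node t \<alpha>" using t BT inTT TTE by blast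
        have bu: "\<beta> \<in> underS kap \<alpha>" using tn t node_dom by blast
        show "\<beta> \<in> underS kap \<gamma>"
        proof (rule ccontr)
          assume "\<beta> \<notin> underS kap \<gamma>"
          then have "(\<gamma>,\<beta>) \<in> kap" using not_underS g bu underS_Field by metis
          then have "\<gamma> \<in> underS kap \<alpha>" using underS_trans2 bu by blast
          then show False using tn node_dom g t by blast
        qed
      next
        assume bu: "\<beta> \<in> underS kap \<gamma>"
        then have "\<beta> \<in> Field kap" using underS_Field by metis
        moreover have "(\<gamma>,\<beta>) \<notin> kap" using bu antisym' underS_iff by blast
        ultimately obtain t where "t \<in> B" "t \<beta> \<noteq> z0" using gmin by blast
        then show "\<sigma> \<beta> \<noteq> z0" using sig by simp
      qed
    qed
    have cond: "\<forall>\<beta>\<in>underS kap \<gamma>. \<not> Dv (restr \<sigma> \<beta>) \<le> b \<and> validv (restr \<sigma> \<beta>) \<beta> (\<sigma> \<beta>)"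
    proof
      fix \<beta> assume "\<beta> \<in> underS kap \<gamma>"
      then have "\<sigma> \<beta> \<noteq> z0" using dom by blast
      then obtain t where t: "t \<in> B" "t \<beta> \<noteq> z0" unfolding \<sigma>_def by (metis)
      obtain \<alpha> where tn: "node t \<alpha>" using t BT inTT TTE by blast
      have bu: "\<beta> \<in> underS kap \<alpha>" using tn t node_dom by blast
      have "restr \<sigma> \<beta> = restr t \<beta>"
      proof
        fix \<delta> show "restr \<sigma> \<beta> \<delta> = restr t \<beta> \<delta>"
        proof (cases "\<delta> \<in> underS kap \<beta>")
          case True
          then have "\<delta> \<in> underS kap \<alpha>" using bu underS_trans1 underS_iff by blast
          then have "t \<delta> \<noteq> z0" using tn node_dom by blast
          then show ?thesis using True sig t by (simp add: restr_def)
        qed (simp add: restr_def)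
      qed
      moreover have "\<sigma> \<beta> = t \<beta>" using sig t by blast
      ultimately show "\<not> Dv (restr \<sigma> \<beta>) \<le> b \<and> validv (restr \<sigma> \<beta>) \<beta> (\<sigma> \<beta>)"
        using tn bu unfolding node_def by simp
    qed
    have sn: "node \<sigma> \<gamma>" unfolding node_def using g dom cond by blast
    have above: "\<forall>u\<in>B. le u \<sigma>" unfolding le_def using sig by metis
    have "\<sigma> \<in> B" using branch_add[OF Bb inTT[OF sn]] above by blast
    then show False using nm above by blast
  qed
  define F where "F = {x. \<exists>t\<in>B. Dv t \<le> x}"
  have nodeB: "\<exists>\<alpha>. node t \<alpha>" if "t \<in> B" for t using that BT inTT TTE by blast
  have aF: "a \<in> F"
  proof -
    obtain \<alpha> where "\<alpha> \<in> Field kap" using infk by (metis finite.emptyI ex_in_conv)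
    then obtain t where "t \<in> B" using cover by blast
    then show ?thesis unfolding F_def using Dv_le_a nodeB by blast
  qed
  have bF: "b \<notin> F"
  proof
    assume "b \<in> F"
    then obtain t where t: "t \<in> B" "Dv t \<le> b" unfolding F_def by blast
    then obtain u where u: "u \<in> B" "\<not> le u t" using nm by blast
    then have tu: "le t u" "u \<noteq> t" using ch t le_refl by blast+
    obtain \<alpha> \<alpha>' where tn: "node t \<alpha>" and un: "node u \<alpha>'" using nodeB t u by blast
    have "(\<alpha>,\<alpha>') \<in> kap" "restr u \<alpha> = t" using le_char[OF tn un] tu by blast+
    moreover have "\<alpha> \<noteq> \<alpha>'"
    proof
      assume "\<alpha> = \<alpha>'"
      then have "u = t" using restr_self[OF un] \<open>restr u \<alpha> = t\<close> by simp
      then show False using tu by blast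
    qed
    ultimately have "\<alpha> \<in> underS kap \<alpha>'" "restr u \<alpha> = t" using underS_iff by blast+
    then show False using un t unfolding node_def by blast
  qed
  have up: "\<forall>x y. x \<in> F \<and> x \<le> y \<longrightarrow> y \<in> F"
  proof (intro allI impI)
    fix x y assume "x \<in> F \<and> x \<le> y"
    then obtain t where "t \<in> B" "Dv t \<le> x" "x \<le> y" unfolding F_def by blast
    then have "Dv t \<le> y" using order.trans by blast
    then show "y \<in> F" unfolding F_def using \<open>t \<in> B\<close> by blast
  qed
  have compl: "\<forall>S m. |S| <o kap \<and> S \<subseteq> F \<and> is_glb S m \<longrightarrow> m \<in> F"
  proof (intro allI impI)
    fix S m assume h: "|S| <o kap \<and> S \<subseteq> F \<and> is_glb S m"
    define ts where "ts s = (SOME t. t \<in> B \<and> Dv t \<le> s)" for s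
    have ts: "ts s \<in> B \<and> Dv (ts s) \<le> s" if "s \<in> S" for s
    proof -
      have "s \<in> F" using h that by blast
      then have "\<exists>t. t \<in> B \<and> Dv t \<le> s" unfolding F_def by blast
      then show ?thesis unfolding ts_def by (rule someI_ex)
    qed
    define ln where "ln s = (SOME \<beta>. node (ts s) \<beta>)" for s
    have ln: "node (ts s) (ln s)" if "s \<in> S" for s
      unfolding ln_def using ts that nodeB by (metis someI_ex)
    let ?K = "ln ` S"
    have KF: "?K \<subseteq> Field kap" using ln node_field by blast
    have "|?K| <o kap" using h by (meson ordLeq_ordLess_trans[OF card_of_image])
    then have "\<not> cofinal ?K kap" using reg KF not_ordLess_ordIso unfolding regularCard_def by blast
    then obtain \<gamma> where g: "\<gamma> \<in> Field kap" "\<forall>\<beta>\<in>?K. \<gamma> = \<beta> \<or> (\<gamma>,\<beta>) \<notin> kap" unfolding cofinal_def by blast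
    have gb: "\<forall>s\<in>S. (ln s, \<gamma>) \<in> kap"
    proof
      fix s assume sS: "s \<in> S"
      then have lK: "ln s \<in> ?K" by blast
      then have lF: "ln s \<in> Field kap" using KF by blast
      show "(ln s, \<gamma>) \<in> kap"
      proof (cases "\<gamma> = ln s")
        case True then show ?thesis using refl g(1) by simp
      next
        case False
        then have "(\<gamma>, ln s) \<notin> kap" using g(2) lK by blast
        then show ?thesis using total'[OF lF g(1)] by blast
      qed
    qed
    obtain t where t: "t \<in> B" "t \<gamma> \<noteq> z0" using cover g by blast
    obtain \<alpha> where tn: "node t \<alpha>" using nodeB t by blast
    have ga: "\<gamma> \<in> underS kap \<alpha>" using tn t node_dom by blast
    have "\<forall>s\<in>S. Dv t \<le> s"
    proof
      fix s assume sS: "s \<in> S"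
      have "le (ts s) t"
      proof (rule ccontr)
        assume "\<not> le (ts s) t"
        then have "le t (ts s)" using ch t ts sS by blast
        then have "(\<alpha>, ln s) \<in> kap" using le_char[OF tn ln[OF sS]] by blast
        then have "(\<alpha>,\<gamma>) \<in> kap" using gb sS trans' by blast
        then show False using ga antisym' underS_iff by blast
      qed
      then have "Dv t \<le> Dv (ts s)" using Dv_anti tn ln sS by blast
      then show "Dv t \<le> s" using ts sS by (meson order.trans)
    qed
    then have "Dv t \<le> m" using h unfolding is_glb_def by blast
    then show "m \<in> F" unfolding F_def using t by blast
  qed
  have prime: "\<forall>i\<in>Field kap. \<forall>j. is_lub (A i) j \<and> j \<in> F \<longrightarrow> (\<exists>x\<in>A i. x \<in> F)"
  proof (intro ballI allI impI)
    fix i j assume i: "i \<in> Field kap" and h: "is_lub (A i) j \<and> j \<in> F"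
    then obtain t where t: "t \<in> B" "Dv t \<le> j" unfolding F_def by blast
    obtain \<alpha> where tn: "node t \<alpha>" using nodeB t by blast
    obtain \<beta> where bt: "\<beta> \<in> Field kap" "(\<alpha>,\<beta>) \<in> kap" "pi \<beta> = i" using picof i node_field tn by blast
    obtain t' where t': "t' \<in> B" "t' \<beta> \<noteq> z0" using cover bt by blast
    obtain \<alpha>' where tn': "node t' \<alpha>'" using nodeB t' by blast
    have ba: "\<beta> \<in> underS kap \<alpha>'" using tn' t' node_dom by blast
    have "le t t'"
    proof (rule ccontr)
      assume "\<not> le t t'"
      then have "le t' t" using ch t t' by blast
      then have "(\<alpha>',\<alpha>) \<in> kap" using le_char[OF tn' tn] by blast
      then have "(\<alpha>',\<beta>) \<in> kap" using bt trans' by blast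
      then show False using ba antisym' underS_iff by blast
    qed
    then have tt': "restr t' \<alpha> = t" using le_char[OF tn tn'] by blast
    let ?s = "restr t' \<beta>"
    have sn: "node ?s \<beta>" using node_restr tn' ba underS_iff by blast
    have "le t ?s" using le_char[OF tn sn] bt tt' restr_restr by metis
    then have "Dv ?s \<le> j" using Dv_anti tn sn t by (meson order.trans)
    then have "splitc (Dv ?s) i" unfolding splitc_def using h by blast
    moreover have "validv ?s \<beta> (t' \<beta>)" using tn' ba unfolding node_def by blast
    ultimately obtain x where x: "x \<in> A i" "t' \<beta> = cd i x" unfolding validv_def using bt by auto
    then have "x \<in> C t'" unfolding C_def using bt by blast
    then have "Dv t' \<le> x" using Dv_le_C tn' by blast
    then show "\<exists>x\<in>A i. x \<in> F" using x t' F_def by blast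
  qed
  have "good kap A F" unfolding good_def using up compl prime by blast
  then show ?thesis using aF bF by blast
qed

end

lemma separate:
  fixes lam :: "'l rel" and kap :: "'k rel" and A :: "'k \<Rightarrow> 'a::distrib_lattice set"
  assumes "regular_infinite_cardinal lam" and "regular_infinite_cardinal kap"
    and "coherent lam kap TYPE('a)"
    and Al: "\<forall>i\<in>Field kap. (card_of (A i), lam) \<in> ordLess"
    and nab: "\<not> a \<le> b"
  shows "\<exists>F. good kap A F \<and> a \<in> F \<and> b \<notin> F"
proof -
  have Ck: "Card_order kap" "infinite (Field kap)" "regularCard kap"
    and Cl: "Card_order lam" "infinite (Field lam)"
    using assms unfolding regular_infinite_cardinal_def by blast+
  have WO: "Well_order kap" using Ck card_order_on_well_order_on by blast
  have infU: "infinite (UNIV :: 'l set)" using infinite_super[OF subset_UNIV Cl(2)] .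
  obtain z0 :: 'l where True by blast
  obtain z1 :: 'l where z1: "z1 \<noteq> z0" using infU by (metis UNIV_I finite.emptyI finite_insert insertCI subsetI finite_subset)
  obtain h1 where h1: "bij_betw h1 (UNIV::'l set) (UNIV - {z0})" using infinite_imp_bij_betw[OF infU] by blast
  have infU1: "infinite (UNIV - {z0} :: 'l set)" using infU by simp
  obtain h2 where h2: "bij_betw h2 (UNIV - {z0} :: 'l set) (UNIV - {z0} - {z1})" using infinite_imp_bij_betw[OF infU1] by blast
  have iso: "|UNIV :: 'l set| =o |UNIV - {z0} - {z1} :: 'l set|"
    using card_of_ordIso bij_betw_trans[OF h1 h2] by blast
  define cd where "cd i = (SOME g. inj_on g (A i) \<and> g ` A i \<subseteq> (UNIV - {z0} - {z1}))" for i
  have cdinj: "\<forall>i\<in>Field kap. inj_on (cd i) (A i) \<and> z0 \<notin> cd i ` A i \<and> z1 \<notin> cd i ` A i"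
  proof
    fix i assume i: "i \<in> Field kap"
    have c1: "|A i| <o lam" using Al i by blast
    have c2: "lam =o |Field lam|" by (rule ordIso_symmetric[OF card_of_Field_ordIso[OF Cl(1)]])
    have c3: "|A i| <o |Field lam|" by (rule ordLess_ordIso_trans[OF c1 c2])
    have c4: "|Field lam| \<le>o |UNIV :: 'l set|" by (rule card_of_mono1) simp
    have c5: "|A i| <o |UNIV :: 'l set|" by (rule ordLess_ordLeq_trans[OF c3 c4])
    have "|A i| \<le>o |UNIV - {z0} - {z1} :: 'l set|" by (rule ordLess_imp_ordLeq[OF ordLess_ordIso_trans[OF c5 iso]])
    then have "\<exists>g. inj_on g (A i) \<and> g ` A i \<subseteq> (UNIV - {z0} - {z1})" using card_of_ordLeq by blast
    then have "inj_on (cd i) (A i) \<and> cd i ` A i \<subseteq> (UNIV - {z0} - {z1})" unfolding cd_def by (rule someI_ex)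
    then show "inj_on (cd i) (A i) \<and> z0 \<notin> cd i ` A i \<and> z1 \<notin> cd i ` A i" by blast
  qed
  have "|Field kap \<times> Field kap| =o |Field kap|" using card_of_Times_same_infinite Ck by blast
  then obtain h where h: "bij_betw h (Field kap) (Field kap \<times> Field kap)"
    using card_of_ordIso ordIso_symmetric by blast
  define pi where "pi \<beta> = fst (h \<beta>)" for \<beta>
  have piF: "\<forall>\<beta>\<in>Field kap. pi \<beta> \<in> Field kap"
  proof
    fix \<beta> assume "\<beta> \<in> Field kap"
    then have "h \<beta> \<in> Field kap \<times> Field kap" by (rule bij_betw_apply[OF h])
    then show "pi \<beta> \<in> Field kap" unfolding pi_def by (auto simp: mem_Times_iff)
  qed
  have picof: "\<forall>i\<in>Field kap. \<forall>\<delta>\<in>Field kap. \<exists>\<beta>\<in>Field kap. (\<delta>,\<beta>) \<in> kap \<and> pi \<beta> = i"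
  proof (intro ballI)
    fix i \<delta> assume i: "i \<in> Field kap" and d: "\<delta> \<in> Field kap"
    show "\<exists>\<beta>\<in>Field kap. (\<delta>,\<beta>) \<in> kap \<and> pi \<beta> = i"
    proof (rule ccontr)
      assume no: "\<not> ?thesis"
      let ?K = "{\<beta>\<in>Field kap. pi \<beta> = i}"
      have "?K \<subseteq> underS kap \<delta>"
      proof
        fix \<beta> assume "\<beta> \<in> ?K"
        then have bF: "\<beta> \<in> Field kap" "pi \<beta> = i" by blast+
        then have "(\<delta>,\<beta>) \<notin> kap" using no by blast
        moreover have "(\<delta>,\<beta>) \<in> kap \<or> (\<beta>,\<delta>) \<in> kap" using wo.total'[OF wo.intro[OF WO] d bF(1)] .
        ultimately have "(\<beta>,\<delta>) \<in> kap" "\<beta> \<noteq> \<delta>" using wo.refl[OF wo.intro[OF WO] d] by blast+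
        then show "\<beta> \<in> underS kap \<delta>" by (simp add: underS_def)
      qed
      then have "|?K| \<le>o |underS kap \<delta>|" by (rule card_of_mono1)
      then have "|?K| <o kap" by (rule ordLeq_ordLess_trans[OF _ card_of_underS[OF Ck(1) d]])
      moreover have "|Field kap| \<le>o |?K|"
      proof -
        let ?g = "inv_into (Field kap) h"
        have gb: "bij_betw ?g (Field kap \<times> Field kap) (Field kap)" using h bij_betw_inv_into by blast
        have "inj_on (\<lambda>\<gamma>. ?g (i,\<gamma>)) (Field kap)"
          using gb i unfolding bij_betw_def inj_on_def by blast
        moreover have "(\<lambda>\<gamma>. ?g (i,\<gamma>)) ` Field kap \<subseteq> ?K"
        proof
          fix x assume "x \<in> (\<lambda>\<gamma>. ?g (i,\<gamma>)) ` Field kap"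
          then obtain \<gamma> where g: "\<gamma> \<in> Field kap" "x = ?g (i,\<gamma>)" by blast
          then have "h x = (i,\<gamma>)" using h i by (meson SigmaI bij_betw_inv_into_right)
          moreover have "x \<in> Field kap" using gb g i unfolding bij_betw_def by blast
          ultimately show "x \<in> ?K" unfolding pi_def by simp
        qed
        ultimately show ?thesis using card_of_ordLeq by blast
      qed
      ultimately have "|Field kap| <o kap" by (rule ordLeq_ordLess_trans[rotated])
      moreover have "|Field kap| =o kap" using card_of_Field_ordIso[OF Ck(1)] .
      ultimately show False using not_ordLess_ordIso by blast
    qed
  qed
  interpret setting kap lam A z0 z1 cd pi a b
    apply (rule setting.intro)
     apply (rule wo.intro[OF WO])
    apply (rule setting_axioms.intro)
    using Ck Cl assms z1 cdinj piF picof by auto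
  show ?thesis using exists_good .
qed

theorem mainTheorem5:
  fixes lam :: "'l rel" and kap :: "'k rel" and A :: "'k \<Rightarrow> 'a::distrib_lattice set"
  assumes "regular_infinite_cardinal lam" and "regular_infinite_cardinal kap"
    and "(kap, lam) \<in> ordLeq"
    and "coherent lam kap TYPE('a)"
    and "\<forall>i\<in>Field kap. (card_of (A i), lam) \<in> ordLess"
  shows "\<exists>(X :: 'a set set) (f :: 'a \<Rightarrow> 'a set set).
           (\<forall>a. f a \<subseteq> X) \<and> inj f \<and> mono f \<and>
           (\<forall>S m. (card_of S, kap) \<in> ordLess \<and> is_glb S m \<longrightarrow> f m = X \<inter> \<Inter> (f ` S)) \<and>
           (\<forall>i\<in>Field kap. \<forall>j. is_lub (A i) j \<longrightarrow> f j = \<Union> (f ` A i))"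
proof -
  define X where "X = {F. good kap A F}"
  define f where "f x = {F\<in>X. x \<in> F}" for x
  have sep: "\<exists>F\<in>X. x \<in> F \<and> y \<notin> F" if "\<not> x \<le> y" for x y
    using separate[OF assms(1,2,4,5) that] X_def by blast
  have "\<forall>x. f x \<subseteq> X" unfolding f_def by blast
  moreover have "inj f"
  proof (rule injI)
    fix x y assume e: "f x = f y"
    have "x \<le> y" using sep[of x y] e unfolding f_def by blast
    moreover have "y \<le> x" using sep[of y x] e unfolding f_def by blast
    ultimately show "x = y" by simp
  qed
  moreover have "mono f" unfolding mono_def f_def X_def good_def by blast
  moreover have "\<forall>S m. (card_of S, kap) \<in> ordLess \<and> is_glb S m \<longrightarrow> f m = X \<inter> \<Inter> (f ` S)"
  proof (intro allI impI)
    fix S :: "'a set" and m :: 'a assume h: "(card_of S, kap) \<in> ordLess \<and> is_glb S m"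
    show "f m = X \<inter> \<Inter> (f ` S)"
      unfolding f_def X_def using h unfolding good_def is_glb_def by blast
  qed
  moreover have "\<forall>i\<in>Field kap. \<forall>j. is_lub (A i) j \<longrightarrow> f j = \<Union> (f ` A i)"
  proof (intro ballI allI impI)
    fix i j assume i: "i \<in> Field kap" and h: "is_lub (A i) j"
    show "f j = \<Union> (f ` A i)"
      unfolding f_def X_def using h i unfolding good_def is_lub_def by blast
  qed
  ultimately show ?thesis by blast
qed

end
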